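(* Let $a\in\mathbb{R}^n$ with $a_1=0$. For each integer $j\ge0$ and each $k\in\{0,1,\dots,\log n\}$ define $b_{j,k}:=a_{1+2^k j}$, with the convention $b_{j,k}=0$ if $1+2^kj>n$. Then $$\max_{j\in[n]}a_j^2\le(\log n)\sum_{k=0}^{(\log n)-1}\sum_{j=1}^n(b_{j,k}-b_{j-1,k})^2.$$
   Context: Here $\log$ denotes the base-2 logarithm and $n$ is a power of $2$, so that $\log n$ is an integer. *)

theory Defs
  imports Complex_Main
begin

text \<open>The vector a in R^n is represented as a function on indices 1..n.
  b a n j k = a_(1 + 2^k j) if 1 + 2^k j <= n, and 0 otherwise.\<close>
definition bseq :: "(nat \<Rightarrow> real) \<Rightarrow> nat \<Rightarrow> nat \<Rightarrow> nat \<Rightarrow> real" where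
  "bseq a n j k = (if 1 + 2^k * j \<le> n then a (1 + 2^k * j) else 0)"

end

theory Submission
  imports Defs
begin

lemma cs_step:
  fixes u d A c :: real
  assumes "u^2 \<le> c * A" "A \<ge> 0" "c \<ge> 0"
  shows "(u + d)^2 \<le> (c + 1) * (A + d^2)"
proof (cases "c = 0")
  case True
  then have "u = 0" using assms by simp
  then show ?thesis using True assms by simp
next
  case False
  then have cp: "c > 0" using assms by simp
  have "2*u*d \<le> u^2/c + c*d^2"
  proof -
    have "0 \<le> (u/c - d)^2 * c" using cp by simp
    also have "\<dots> = u^2/c - 2*u*d + c*d^2" using cp
      by (simp add: power2_eq_square field_simps)
    finally show ?thesis by simp
  qed
  moreover have "u^2/c \<le> A" using assms cp by (simp add: field_simps mult.commute)
  ultimately have "(u+d)^2 \<le> u^2 + A + c*d^2 + d^2"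
    by (simp add: power2_eq_square algebra_simps)
  also have "\<dots> \<le> c*A + A + c*d^2 + d^2" using assms by simp
  finally show ?thesis by (simp add: algebra_simps)
qed

theorem claimC3:
  fixes a :: "nat \<Rightarrow> real" and n m :: nat
  assumes "n = 2 ^ m" and "a 1 = 0"
  shows "(MAX j\<in>{1..n}. (a j)^2)
           \<le> real m * (\<Sum>k<m. \<Sum>j=1..n. (bseq a n j k - bseq a n (j - 1) k)^2)"
proof -
  define S where "S k = (\<Sum>j=1..n. (bseq a n j k - bseq a n (j - 1) k)^2)" for k
  have Snn: "S k \<ge> 0" for k unfolding S_def by (simp add: sum_nonneg)
  have main: "\<forall>x. x < 2^m \<longrightarrow> 2^(m-d) dvd x \<longrightarrow>
      (a (1+x))^2 \<le> real d * (\<Sum>k\<in>{m-d..<m}. S k)" if "d \<le> m" for d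
    using that
  proof (induction d)
    case 0
    show ?case
    proof (intro allI impI)
      fix x :: nat assume "x < 2^m" "2^(m-0) dvd x"
      then have "x = 0" by (metis diff_zero dvd_imp_le linorder_not_le neq0_conv)
      then show "(a (1+x))^2 \<le> real 0 * (\<Sum>k\<in>{m-0..<m}. S k)" using assms by simp
    qed
  next
    case (Suc d)
    define t where "t = m - Suc d"
    have tm: "t < m" "m - d = Suc t" using Suc.prems unfolding t_def by auto
    have IH: "\<And>x. x < 2^m \<Longrightarrow> 2^(Suc t) dvd x \<Longrightarrow>
      (a (1+x))^2 \<le> real d * (\<Sum>k\<in>{Suc t..<m}. S k)"
      using Suc tm by auto
    have split: "(\<Sum>k\<in>{t..<m}. S k) = S t + (\<Sum>k\<in>{Suc t..<m}. S k)"
      using tm by (simp add: sum.atLeast_Suc_lessThan)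
    have A0: "(\<Sum>k\<in>{Suc t..<m}. S k) \<ge> 0" using Snn by (simp add: sum_nonneg)
    show ?case
    proof (intro allI impI)
      fix x :: nat assume xm: "x < 2^m" and dv: "2^(m - Suc d) dvd x"
      then obtain j where j: "x = 2^t * j" using t_def by (auto elim: dvdE)
      show "(a (1+x))^2 \<le> real (Suc d) * (\<Sum>k\<in>{m - Suc d..<m}. S k)"
      proof (cases "even j")
        case True
        then obtain i where "j = 2*i" by auto
        then have "2^(Suc t) dvd x" using j by simp
        then have "(a (1+x))^2 \<le> real d * (\<Sum>k\<in>{Suc t..<m}. S k)" using IH xm by blast
        also have "\<dots> \<le> real (Suc d) * (S t + (\<Sum>k\<in>{Suc t..<m}. S k))"
          using A0 Snn[of t] by (intro mult_mono) auto
        finally show ?thesis using split t_def by simp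
      next
        case False
        then obtain i where ji: "j = Suc (2*i)" using oddE by fastforce
        define x' where "x' = 2^t * (2*i)"
        have x'x: "x' < x" "x = x' + 2^t" using j ji unfolding x'_def by auto
        have dv': "2^(Suc t) dvd x'" unfolding x'_def by simp
        have u: "(a (1+x'))^2 \<le> real d * (\<Sum>k\<in>{Suc t..<m}. S k)"
          using IH dv' x'x xm by simp
        have n: "n = 2^m" by fact
        have jn: "j \<le> n"
        proof -
          have "j \<le> 2^t * j" by simp
          then show ?thesis using j xm n by linarith
        qed
        have tm2: "(a (1+x) - a (1+x'))^2 = (bseq a n j t - bseq a n (j - 1) t)^2"
          unfolding bseq_def using j ji x'x xm n x'_def by (auto simp: add.commute)
        have "(bseq a n j t - bseq a n (j - 1) t)^2 \<le> S t"
          unfolding S_def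
          by (rule member_le_sum[where f="\<lambda>j. (bseq a n j t - bseq a n (j - 1) t)^2"])
             (use jn ji in auto)
        then have dS: "(a (1+x) - a (1+x'))^2 \<le> S t" using tm2 by simp
        have "(a (1+x))^2 = (a (1+x') + (a (1+x) - a (1+x')))^2" by simp
        also have "\<dots> \<le> (real d + 1) * ((\<Sum>k\<in>{Suc t..<m}. S k) + (a (1+x) - a (1+x'))^2)"
          by (rule cs_step[OF u A0]) simp
        also have "\<dots> \<le> (real d + 1) * ((\<Sum>k\<in>{Suc t..<m}. S k) + S t)"
          using dS by (intro mult_left_mono) auto
        finally show ?thesis using split t_def by (simp add: algebra_simps)
      qed
    qed
  qed
  have "\<forall>j\<in>{1..n}. (a j)^2 \<le> real m * (\<Sum>k<m. S k)"
  proof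
    fix j assume "j \<in> {1..n}"
    then have "j - 1 < 2^m" "j = 1 + (j - 1)" using assms by auto
    show "(a j)^2 \<le> real m * (\<Sum>k<m. S k)"
    proof -
      have "(a (1 + (j - 1)))^2 \<le> real m * (\<Sum>k\<in>{m-m..<m}. S k)"
        using main[of m] \<open>j - 1 < 2^m\<close> by simp
      then show ?thesis using \<open>j = 1 + (j - 1)\<close> by (simp add: atLeast0LessThan)
    qed
  qed
  moreover have "{1..n} \<noteq> {}" using assms by simp
  ultimately show ?thesis unfolding S_def by simp
qed

end
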